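(* Let $n\in\mathbb N$ and write $n=mp+c$ with $m\in\mathbb N_0$ and $0\le c<p$. Then the sign representation $\mathrm{sgn}(n)$ of $\mathfrak S_n$ is isomorphic to the signed Young module $Y((1^c)|(mp))$.
   Context: $F$ is a field of odd prime characteristic $p$; $\mathfrak S_n$ is the symmetric group on $\{1,\dots,n\}$. $(1^c)$ is the partition with $c$ parts equal to $1$, and $(mp)=p\cdot(m)$ (empty if $m=0$). For a pair $(\alpha|\beta)$ of partitions with $|\alpha|+|\beta|=n$ (the set of these is $\mathscr P^2(n)$), $M(\alpha|\beta)=\mathrm{Ind}_{\mathfrak S_\alpha\times\mathfrak S_\beta}^{\mathfrak S_n}(F\boxtimes\mathrm{sgn})$ with $\mathfrak S_\alpha$ the Young subgroup of $\{1,\dots,|\alpha|\}$ acting trivially and $\mathfrak S_\beta$ the Young subgroup of $\{|\alpha|+1,\dots,n\}$ acting by sign. Dominance: $(\lambda|\nu)\trianglerighteq(\alpha|\beta)$ iff for all $k\ge1$, $\sum_{i\le k}\lambda_i\ge\sum_{i\le k}\alpha_i$ and $|\lambda|+\sum_{i\le k}\nu_i\ge|\alpha|+\sum_{i\le k}\beta_i$. Signed Young module $Y(\lambda|p\mu)$ (partitions $\lambda,\mu$, $|\lambda|+p|\mu|=n$): the unique (up to isomorphism) indecomposable summand of $M(\lambda|p\mu)$ that is a summand of $M(\alpha|\beta)$, $(\alpha|\beta)\in\mathscr P^2(n)$, only if $(\lambda|p\mu)\trianglerighteq(\alpha|\beta)$. *)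

theory Defs
  imports "HOL-Combinatorics.Permutations" "HOL-Computational_Algebra.Primes"
begin

text \<open>Representations of S_n over a field 'f are modelled concretely: the underlying space is a
subspace V of the function space 'x => 'f (pointwise operations), and rho s is the action of s.\<close>

definition Sym :: "nat \<Rightarrow> (nat \<Rightarrow> nat) set" where
  "Sym n = {s. s permutes {1..n}}"

definition is_subspace :: "('x \<Rightarrow> 'f::field) set \<Rightarrow> bool" where
  "is_subspace V \<longleftrightarrow> (\<lambda>_. 0) \<in> V \<and> (\<forall>f\<in>V. \<forall>g\<in>V. (\<lambda>x. f x + g x) \<in> V)
     \<and> (\<forall>c. \<forall>f\<in>V. (\<lambda>x. c * f x) \<in> V)"

definition is_linear_on :: "('x \<Rightarrow> 'f::field) set \<Rightarrow> (('x \<Rightarrow> 'f) \<Rightarrow> ('y \<Rightarrow> 'f)) \<Rightarrow> bool" where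
  "is_linear_on V \<phi> \<longleftrightarrow> (\<forall>f\<in>V. \<forall>g\<in>V. \<phi> (\<lambda>x. f x + g x) = (\<lambda>y. \<phi> f y + \<phi> g y))
     \<and> (\<forall>c. \<forall>f\<in>V. \<phi> (\<lambda>x. c * f x) = (\<lambda>y. c * \<phi> f y))"

definition is_rep :: "nat \<Rightarrow> ('x \<Rightarrow> 'f::field) set \<Rightarrow> ((nat \<Rightarrow> nat) \<Rightarrow> ('x \<Rightarrow> 'f) \<Rightarrow> ('x \<Rightarrow> 'f)) \<Rightarrow> bool" where
  "is_rep n V \<rho> \<longleftrightarrow> is_subspace V
     \<and> (\<forall>s\<in>Sym n. \<rho> s ` V \<subseteq> V \<and> is_linear_on V (\<rho> s))
     \<and> (\<forall>v\<in>V. \<rho> id v = v)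
     \<and> (\<forall>s\<in>Sym n. \<forall>t\<in>Sym n. \<forall>v\<in>V. \<rho> (s \<circ> t) v = \<rho> s (\<rho> t v))"

definition is_subrep :: "nat \<Rightarrow> ('x \<Rightarrow> 'f::field) set \<Rightarrow> ('x \<Rightarrow> 'f) set \<Rightarrow> ((nat \<Rightarrow> nat) \<Rightarrow> ('x \<Rightarrow> 'f) \<Rightarrow> ('x \<Rightarrow> 'f)) \<Rightarrow> bool" where
  "is_subrep n W V \<rho> \<longleftrightarrow> W \<subseteq> V \<and> is_subspace W \<and> (\<forall>s\<in>Sym n. \<rho> s ` W \<subseteq> W)"

definition is_direct_sum :: "('x \<Rightarrow> 'f::field) set \<Rightarrow> ('x \<Rightarrow> 'f) set \<Rightarrow> ('x \<Rightarrow> 'f) set \<Rightarrow> bool" where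
  "is_direct_sum V W1 W2 \<longleftrightarrow> W1 \<inter> W2 = {\<lambda>_. 0}
     \<and> (\<forall>v\<in>V. \<exists>w1\<in>W1. \<exists>w2\<in>W2. v = (\<lambda>x. w1 x + w2 x))"

definition is_hom :: "nat \<Rightarrow> ('x \<Rightarrow> 'f::field) set \<Rightarrow> ((nat \<Rightarrow> nat) \<Rightarrow> ('x \<Rightarrow> 'f) \<Rightarrow> ('x \<Rightarrow> 'f))
    \<Rightarrow> ('y \<Rightarrow> 'f) set \<Rightarrow> ((nat \<Rightarrow> nat) \<Rightarrow> ('y \<Rightarrow> 'f) \<Rightarrow> ('y \<Rightarrow> 'f)) \<Rightarrow> (('x \<Rightarrow> 'f) \<Rightarrow> ('y \<Rightarrow> 'f)) \<Rightarrow> bool" where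
  "is_hom n V \<rho> W \<tau> \<phi> \<longleftrightarrow> \<phi> ` V \<subseteq> W \<and> is_linear_on V \<phi>
     \<and> (\<forall>s\<in>Sym n. \<forall>v\<in>V. \<phi> (\<rho> s v) = \<tau> s (\<phi> v))"

definition is_iso :: "nat \<Rightarrow> ('x \<Rightarrow> 'f::field) set \<Rightarrow> ((nat \<Rightarrow> nat) \<Rightarrow> ('x \<Rightarrow> 'f) \<Rightarrow> ('x \<Rightarrow> 'f))
    \<Rightarrow> ('y \<Rightarrow> 'f) set \<Rightarrow> ((nat \<Rightarrow> nat) \<Rightarrow> ('y \<Rightarrow> 'f) \<Rightarrow> ('y \<Rightarrow> 'f)) \<Rightarrow> bool" where
  "is_iso n V \<rho> W \<tau> \<longleftrightarrow> (\<exists>\<phi>. is_hom n V \<rho> W \<tau> \<phi> \<and> bij_betw \<phi> V W)"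

definition is_summand :: "nat \<Rightarrow> ('y \<Rightarrow> 'f::field) set \<Rightarrow> ((nat \<Rightarrow> nat) \<Rightarrow> ('y \<Rightarrow> 'f) \<Rightarrow> ('y \<Rightarrow> 'f))
    \<Rightarrow> ('x \<Rightarrow> 'f) set \<Rightarrow> ((nat \<Rightarrow> nat) \<Rightarrow> ('x \<Rightarrow> 'f) \<Rightarrow> ('x \<Rightarrow> 'f)) \<Rightarrow> bool" where
  "is_summand n X \<rho>X V \<rho> \<longleftrightarrow> (\<exists>W1 W2. is_subrep n W1 V \<rho> \<and> is_subrep n W2 V \<rho>
      \<and> is_direct_sum V W1 W2 \<and> is_iso n X \<rho>X W1 \<rho>)"

definition indecomposable :: "nat \<Rightarrow> ('x \<Rightarrow> 'f::field) set \<Rightarrow> ((nat \<Rightarrow> nat) \<Rightarrow> ('x \<Rightarrow> 'f) \<Rightarrow> ('x \<Rightarrow> 'f)) \<Rightarrow> bool" where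
  "indecomposable n V \<rho> \<longleftrightarrow> V \<noteq> {\<lambda>_. 0} \<and>
     \<not> (\<exists>W1 W2. is_subrep n W1 V \<rho> \<and> is_subrep n W2 V \<rho> \<and> is_direct_sum V W1 W2
          \<and> W1 \<noteq> {\<lambda>_. 0} \<and> W2 \<noteq> {\<lambda>_. 0})"

definition is_partition :: "nat list \<Rightarrow> bool" where
  "is_partition a \<longleftrightarrow> sorted (rev a) \<and> 0 \<notin> set a"

definition dominates2 :: "nat list \<Rightarrow> nat list \<Rightarrow> nat list \<Rightarrow> nat list \<Rightarrow> bool" where
  "dominates2 l v a b \<longleftrightarrow> (\<forall>k\<ge>1. sum_list (take k l) \<ge> sum_list (take k a)
      \<and> sum_list l + sum_list (take k v) \<ge> sum_list a + sum_list (take k b))"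

text \<open>Index (0-based) of the block of the composition g (blocks are consecutive intervals
starting at 1) containing i.\<close>
definition block_of :: "nat list \<Rightarrow> nat \<Rightarrow> nat" where
  "block_of g i = (LEAST k. i \<le> sum_list (take (Suc k) g))"

text \<open>Young subgroup S_a x S_b of S_n: S_a acts on {1..|a|}, S_b on {|a|+1..n}.\<close>
definition young_sub :: "nat \<Rightarrow> nat list \<Rightarrow> nat list \<Rightarrow> (nat \<Rightarrow> nat) set" where
  "young_sub n a b = {h \<in> Sym n. \<forall>i\<in>{1..n}. block_of (a @ b) (h i) = block_of (a @ b) i}"

text \<open>The linear character of S_a x S_b which is trivial on S_a and the sign on S_b.\<close>
definition young_char :: "nat list \<Rightarrow> (nat \<Rightarrow> nat) \<Rightarrow> 'f::field" where
  "young_char a h = of_int (sign (\<lambda>i. if sum_list a < i then h i else i))"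

text \<open>M(a|b) = Ind (F boxtimes sgn) from S_a x S_b to S_n, realised (as the isomorphic
co-induced module) as the functions f on S_n with f (h o g) = chi(h) f(g) for h in the Young
subgroup, with S_n acting by right translation.\<close>
definition Mspace :: "nat \<Rightarrow> nat list \<Rightarrow> nat list \<Rightarrow> ((nat \<Rightarrow> nat) \<Rightarrow> 'f::field) set" where
  "Mspace n a b = {f. (\<forall>g. g \<notin> Sym n \<longrightarrow> f g = 0)
      \<and> (\<forall>h\<in>young_sub n a b. \<forall>g\<in>Sym n. f (h \<circ> g) = young_char a h * f g)}"

definition Mact :: "(nat \<Rightarrow> nat) \<Rightarrow> ((nat \<Rightarrow> nat) \<Rightarrow> 'f::field) \<Rightarrow> ((nat \<Rightarrow> nat) \<Rightarrow> 'f)" where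
  "Mact s f = (\<lambda>g. f (g \<circ> s))"

definition sgn_space :: "(unit \<Rightarrow> 'f::field) set" where
  "sgn_space = UNIV"

definition sgn_act :: "(nat \<Rightarrow> nat) \<Rightarrow> (unit \<Rightarrow> 'f::field) \<Rightarrow> (unit \<Rightarrow> 'f)" where
  "sgn_act s f = (\<lambda>u. of_int (sign s) * f u)"

text \<open>(X, rhoX) is (isomorphic to) the signed Young module Y(l|p mu): the indecomposable
summand of M(l|p mu) which is a summand of M(a|b) only if (l|p mu) dominates (a|b).
By the existence/uniqueness result quoted in the paper's definition, this determines
Y(l|p mu) up to isomorphism.\<close>
definition is_signed_young :: "nat \<Rightarrow> nat \<Rightarrow> nat list \<Rightarrow> nat list
    \<Rightarrow> ('x \<Rightarrow> 'f::field) set \<Rightarrow> ((nat \<Rightarrow> nat) \<Rightarrow> ('x \<Rightarrow> 'f) \<Rightarrow> ('x \<Rightarrow> 'f)) \<Rightarrow> bool" where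
  "is_signed_young n p l mu X \<rho>X \<longleftrightarrow>
     is_partition l \<and> is_partition mu \<and> sum_list l + p * sum_list mu = n
     \<and> is_rep n X \<rho>X \<and> indecomposable n X \<rho>X
     \<and> is_summand n X \<rho>X (Mspace n l (map ((*) p) mu) :: ((nat \<Rightarrow> nat) \<Rightarrow> 'f) set) Mact
     \<and> (\<forall>a b. is_partition a \<and> is_partition b \<and> sum_list a + sum_list b = n
          \<and> is_summand n X \<rho>X (Mspace n a b :: ((nat \<Rightarrow> nat) \<Rightarrow> 'f) set) Mact
          \<longrightarrow> dominates2 l (map ((*) p) mu) a b)"

end

theory Submission
  imports Defs "HOL-Algebra.Sym_Groups"
begin

lemma sum_take_mono: "j \<le> k \<Longrightarrow> sum_list (take j (g::nat list)) \<le> sum_list (take k g)"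
proof (induction g arbitrary: j k)
  case Nil then show ?case by simp
next
  case (Cons x g)
  show ?case
  proof (cases j)
    case 0 then show ?thesis by simp
  next
    case (Suc j')
    then obtain k' where "k = Suc k'" "j' \<le> k'" using Cons.prems by (cases k) auto
    then show ?thesis using Cons.IH[of j' k'] Suc by simp
  qed
qed

lemma block_of_eq:
  assumes "sum_list (take j g) < i" "i \<le> sum_list (take (Suc j) g)"
  shows "block_of g i = j"
  unfolding block_of_def
proof (rule Least_equality)
  show "i \<le> sum_list (take (Suc j) g)" by fact
next
  fix y assume y: "i \<le> sum_list (take (Suc y) g)"
  show "j \<le> y"
  proof (rule ccontr)
    assume "\<not> j \<le> y"
    then have "Suc y \<le> j" by simp
    from sum_take_mono[OF this, of g] y assms(1) show False by simp
  qed
qed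

lemma block_of_bounds:
  assumes "1 \<le> i" "i \<le> sum_list g"
  shows "sum_list (take (block_of g i) g) < i \<and> i \<le> sum_list (take (Suc (block_of g i)) g)"
proof -
  have w: "i \<le> sum_list (take (Suc (length g)) g)" using assms by simp
  have 1: "i \<le> sum_list (take (Suc (block_of g i)) g)"
    unfolding block_of_def by (rule LeastI[where P="\<lambda>k. i \<le> sum_list (take (Suc k) g)", OF w])
  have 2: "sum_list (take (block_of g i) g) < i"
  proof (cases "block_of g i")
    case 0 then show ?thesis using assms by simp
  next
    case (Suc k)
    have "\<not> i \<le> sum_list (take (Suc k) g)"
      using Suc unfolding block_of_def by (metis lessI not_less_Least)
    then show ?thesis using Suc by simp
  qed
  show ?thesis using 1 2 by simp
qed


definition Kfix :: "nat \<Rightarrow> nat \<Rightarrow> (nat \<Rightarrow> nat) set" where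
  "Kfix n j = {g. g permutes {1..n} \<and> (\<forall>i\<in>{1..j}. g i = i)}"

lemma Kfix_alt: "Kfix n j = {g. g permutes {Suc j..n}}"
proof (rule Set.set_eqI, rule iffI)
  fix g assume "g \<in> Kfix n j"
  then have gp: "g permutes {1..n}" and gf: "\<forall>i\<in>{1..j}. g i = i" by (auto simp: Kfix_def)
  have "\<forall>x. x \<notin> {Suc j..n} \<longrightarrow> g x = x"
  proof (intro allI impI)
    fix x assume "x \<notin> {Suc j..n}"
    then have "x \<notin> {1..n} \<or> x \<in> {1..j}" by auto
    then show "g x = x" using gf permutes_not_in[OF gp] by blast
  qed
  moreover have "\<forall>y. \<exists>!x. g x = y" using gp unfolding permutes_def by blast
  ultimately show "g \<in> {g. g permutes {Suc j..n}}" unfolding permutes_def by blast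
next
  fix g assume "g \<in> {g. g permutes {Suc j..n}}"
  then have gp: "g permutes {Suc j..n}" by simp
  have "g permutes {1..n}" by (rule permutes_subset[OF gp]) auto
  moreover have "\<forall>i\<in>{1..j}. g i = i" using permutes_not_in[OF gp] by auto
  ultimately show "g \<in> Kfix n j" by (simp add: Kfix_def)
qed

lemma card_Kfix: "j \<le> n \<Longrightarrow> card (Kfix n j) = fact (n - j)"
  using Kfix_alt card_permutations[of "{Suc j..n}"] by simp

lemma Kfix_subgroup: "subgroup (Kfix n j) (sym_group n)"
proof -
  have a: "Kfix n j \<subseteq> carrier (sym_group n)" by (auto simp: Kfix_def sym_group_carrier)
  have b: "\<And>x y. x \<in> Kfix n j \<Longrightarrow> y \<in> Kfix n j \<Longrightarrow> x \<otimes>\<^bsub>sym_group n\<^esub> y \<in> Kfix n j"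
    by (auto simp: Kfix_def sym_group_mult permutes_compose)
  have c: "\<one>\<^bsub>sym_group n\<^esub> \<in> Kfix n j" by (auto simp: Kfix_def sym_group_one permutes_id)
  have d: "inv\<^bsub>sym_group n\<^esub> x \<in> Kfix n j" if x: "x \<in> Kfix n j" for x
  proof -
    from x have xc: "x \<in> carrier (sym_group n)" by (auto simp: Kfix_def sym_group_carrier)
    from x have xp: "x permutes {1..n}" and xf: "\<forall>i\<in>{1..j}. x i = i" by (auto simp: Kfix_def)
    have "inv' x i = i" if "i \<in> {1..j}" for i
      using xf that permutes_inverses(2)[OF xp, of i] by metis
    then have "inv' x \<in> Kfix n j" using permutes_inv[OF xp] by (auto simp: Kfix_def)
    then show ?thesis using xc by simp
  qed
  show ?thesis using a b c d by (intro subgroup.intro) auto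
qed

lemma card_rcosets_Kfix:
  assumes "j \<le> n"
  shows "card (rcosets\<^bsub>sym_group n\<^esub> (Kfix n j)) * fact (n - j) = fact n"
proof -
  interpret G: group "sym_group n" by (rule sym_group_is_group)
  have "card (rcosets\<^bsub>sym_group n\<^esub> (Kfix n j)) * card (Kfix n j) = order (sym_group n)"
    by (rule G.lagrange[OF Kfix_subgroup])
  then show ?thesis using card_Kfix[OF assms] sym_group_card_carrier[of n] by (simp add: order_def)
qed

lemma ncos_eq_prod:
  assumes "k \<le> n"
  shows "card (rcosets\<^bsub>sym_group n\<^esub> (Kfix n k)) = prod Suc {n-k..<n}"
proof -
  have "fact n = prod Suc {n - k..<n} * (fact (n - k) :: nat)" using fact_split[OF assms, where 'a=nat] by simp
  then show ?thesis using card_rcosets_Kfix[OF assms] by (metis fact_nonzero mult_right_cancel)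
qed

lemma ncos_dvd:
  assumes "p > 0" "m \<ge> 1" "n = m * p + c"
  shows "p dvd card (rcosets\<^bsub>sym_group n\<^esub> (Kfix n (Suc c)))"
proof -
  have "m * p \<ge> 1 * p" using assms(2) by (rule mult_le_mono1)
  then have le: "Suc c \<le> n" using assms by linarith
  have "n - Suc c \<in> {n - Suc c..<n}" using le by auto
  moreover have "Suc (n - Suc c) = m * p" using le assms by simp
  ultimately have "m * p dvd prod Suc {n - Suc c..<n}" by (metis dvd_prodI finite_atLeastLessThan)
  moreover have "p dvd m * p" by simp
  ultimately show ?thesis using ncos_eq_prod[OF le] dvd_trans by metis
qed

lemma ncos_ndvd:
  assumes "prime p" "c < p" "n = m * p + c"
  shows "\<not> p dvd card (rcosets\<^bsub>sym_group n\<^esub> (Kfix n c))"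
proof
  assume "p dvd card (rcosets\<^bsub>sym_group n\<^esub> (Kfix n c))"
  then have "p dvd prod Suc {n-c..<n}" using ncos_eq_prod[of c n] assms by simp
  then obtain i where i: "i \<in> {n-c..<n}" "p dvd Suc i" using prime_dvd_prod_iff[OF _ assms(1)] by blast
  define d where "d = i - m * p"
  have d: "i = m * p + d" "d < c" using i(1) assms(3) unfolding d_def by auto
  have "Suc i = m * p + Suc d" using d by simp
  then have "p dvd Suc d" using i(2) by (metis dvd_add_right_iff dvd_triv_right)
  moreover have "0 < Suc d" "Suc d < p" using d assms by auto
  ultimately show False using nat_dvd_not_less by blast
qed

definition rep :: "(nat \<Rightarrow> nat) set \<Rightarrow> (nat \<Rightarrow> nat)" where
  "rep C = (SOME x. x \<in> C)"

lemma Sym_carrier: "Sym n = carrier (sym_group n)"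
  by (auto simp: Sym_def sym_group_carrier)

lemma rcos_mem_iff:
  assumes K: "subgroup K (sym_group n)" and t: "t \<in> Sym n"
  shows "x \<in> K #>\<^bsub>sym_group n\<^esub> t \<longleftrightarrow> x \<in> Sym n \<and> x \<circ> inv' t \<in> K"
proof
  assume "x \<in> K #>\<^bsub>sym_group n\<^esub> t"
  then obtain h where h: "h \<in> K" "x = h \<circ> t" unfolding r_coset_def sym_group_mult by auto
  have hS: "h \<in> Sym n" using h(1) subgroup.subset[OF K] Sym_carrier by auto
  have tp: "t permutes {1..n}" using t by (simp add: Sym_def)
  have "x \<circ> inv' t = h" using h(2) permutes_inv_o(1)[OF tp] by (simp add: comp_assoc)
  moreover have "x \<in> Sym n" using h hS t by (simp add: Sym_def permutes_compose)
  ultimately show "x \<in> Sym n \<and> x \<circ> inv' t \<in> K" using h by simp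
next
  assume a: "x \<in> Sym n \<and> x \<circ> inv' t \<in> K"
  have tp: "t permutes {1..n}" using t by (simp add: Sym_def)
  have "x = (x \<circ> inv' t) \<circ> t" using permutes_inv_o(2)[OF tp] by (simp add: comp_assoc)
  then show "x \<in> K #>\<^bsub>sym_group n\<^esub> t" using a unfolding r_coset_def sym_group_mult by blast
qed

lemma rcosets_rep:
  assumes K: "subgroup K (sym_group n)" and C: "C \<in> rcosets\<^bsub>sym_group n\<^esub> K"
  shows "rep C \<in> C" "rep C \<in> Sym n" "C = K #>\<^bsub>sym_group n\<^esub> rep C" "C \<subseteq> Sym n"
proof -
  interpret G: group "sym_group n" by (rule sym_group_is_group)
  obtain a where a: "a \<in> carrier (sym_group n)" "C = K #>\<^bsub>sym_group n\<^esub> a"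
    using C unfolding RCOSETS_def by auto
  have "a \<in> C" using a G.rcos_self[OF a(1) K] by simp
  then show r: "rep C \<in> C" unfolding rep_def by (rule someI[where P="\<lambda>x. x \<in> C"])
  show sub: "C \<subseteq> Sym n" using a G.r_coset_subset_G[OF subgroup.subset[OF K] a(1)] Sym_carrier by auto
  show "rep C \<in> Sym n" using r sub by auto
  show "C = K #>\<^bsub>sym_group n\<^esub> rep C" using G.repr_independence[of "rep C" K a] r a K by simp
qed

lemma finite_rcosets: "finite (rcosets\<^bsub>sym_group n\<^esub> K)" if "subgroup K (sym_group n)"
proof -
  interpret G: group "sym_group n" by (rule sym_group_is_group)
  have "carrier (sym_group n) = {p. p permutes {1..n}}" by (auto simp: sym_group_carrier)
  then have "finite (carrier (sym_group n))" using finite_permutations[of "{1..n}"] by simp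
  then show ?thesis using G.rcosets_subset_PowG[OF that] by (meson finite_Pow_iff finite_subset)
qed

lemma unique_rcoset:
  assumes K: "subgroup K (sym_group n)" and g: "g \<in> Sym n"
  shows "\<exists>!C. C \<in> rcosets\<^bsub>sym_group n\<^esub> K \<and> g \<in> C"
proof -
  interpret G: group "sym_group n" by (rule sym_group_is_group)
  have "g \<in> \<Union>(rcosets\<^bsub>sym_group n\<^esub> K)" using G.rcosets_part_G[OF K] g Sym_carrier by auto
  then obtain C where C: "C \<in> rcosets\<^bsub>sym_group n\<^esub> K" "g \<in> C" by auto
  moreover have "D = C" if "D \<in> rcosets\<^bsub>sym_group n\<^esub> K" "g \<in> D" for D
    using G.rcos_disjoint[OF K] C that unfolding pairwise_def disjnt_def by blast
  ultimately show ?thesis by blast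
qed

lemma coset_sum_E:
  fixes F :: "(nat \<Rightarrow> nat) \<Rightarrow> 'f::field"
  assumes K: "subgroup K (sym_group n)"
    and F0: "\<And>g. g \<notin> Sym n \<Longrightarrow> F g = 0"
    and Feq: "\<And>g s. g \<in> Sym n \<Longrightarrow> s \<in> Sym n \<Longrightarrow> F (g \<circ> s) = of_int (sign s) * F g"
  shows "F g = (\<Sum>C\<in>rcosets\<^bsub>sym_group n\<^esub> K. of_int (sign (rep C)) *
                 (if g \<circ> inv' (rep C) \<in> K then F (g \<circ> inv' (rep C)) else 0))"
proof (cases "g \<in> Sym n")
  case False
  have KS: "K \<subseteq> Sym n" using subgroup.subset[OF K] Sym_carrier by auto
  have "g \<circ> inv' (rep C) \<notin> K" if C: "C \<in> rcosets\<^bsub>sym_group n\<^esub> K" for C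
  proof
    assume a: "g \<circ> inv' (rep C) \<in> K"
    have rp: "rep C permutes {1..n}" using rcosets_rep(2)[OF K C] by (simp add: Sym_def)
    have "g = (g \<circ> inv' (rep C)) \<circ> rep C" using permutes_inv_o(2)[OF rp] by (simp add: comp_assoc)
    then have "g \<in> Sym n" using a KS rp by (metis Sym_def mem_Collect_eq permutes_compose subsetD)
    then show False using False by simp
  qed
  then show ?thesis using F0[OF False] by simp
next
  case True
  obtain C0 where C0: "C0 \<in> rcosets\<^bsub>sym_group n\<^esub> K" "g \<in> C0"
    and uq: "\<And>D. D \<in> rcosets\<^bsub>sym_group n\<^esub> K \<Longrightarrow> g \<in> D \<Longrightarrow> D = C0"
    using unique_rcoset[OF K True] by blast
  have trm: "of_int (sign (rep C)) * (if g \<circ> inv' (rep C) \<in> K then F (g \<circ> inv' (rep C)) else 0)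
      = (if C = C0 then F g else 0)" if C: "C \<in> rcosets\<^bsub>sym_group n\<^esub> K" for C
  proof -
    have rS: "rep C \<in> Sym n" using rcosets_rep(2)[OF K C] .
    have rp: "rep C permutes {1..n}" using rS by (simp add: Sym_def)
    have iff: "g \<circ> inv' (rep C) \<in> K \<longleftrightarrow> g \<in> C"
      using rcos_mem_iff[OF K rS, of g] rcosets_rep(3)[OF K C] True by simp
    show ?thesis
    proof (cases "g \<in> C")
      case True2: True
      have iS: "inv' (rep C) \<in> Sym n" using permutes_inv[OF rp] by (simp add: Sym_def)
      have "F (g \<circ> inv' (rep C)) = of_int (sign (inv' (rep C))) * F g" using Feq[OF True iS] .
      moreover have "sign (inv' (rep C)) = sign (rep C)" using sign_inverse permutation_permutes rp by blast
      moreover have "(of_int (sign (rep C)) :: 'f) * of_int (sign (rep C)) = 1"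
        by (metis of_int_1 of_int_mult sign_idempotent)
      ultimately show ?thesis using iff True2 uq[OF C] by (simp add: mult.assoc[symmetric])
    next
      case False2: False
      then show ?thesis using iff C0(2) by auto
    qed
  qed
  have "(\<Sum>C\<in>rcosets\<^bsub>sym_group n\<^esub> K. of_int (sign (rep C)) *
                 (if g \<circ> inv' (rep C) \<in> K then F (g \<circ> inv' (rep C)) else 0))
      = (\<Sum>C\<in>rcosets\<^bsub>sym_group n\<^esub> K. (if C = C0 then F g else 0))"
    using trm by (rule sum.cong[OF refl])
  also have "\<dots> = F g" using C0(1) finite_rcosets[OF K] by simp
  finally show ?thesis by simp
qed

lemma rcosets_shift_bij:
  assumes K: "subgroup K (sym_group n)" and s: "s \<in> Sym n"
  shows "bij_betw (\<lambda>C. C #>\<^bsub>sym_group n\<^esub> s) (rcosets\<^bsub>sym_group n\<^esub> K) (rcosets\<^bsub>sym_group n\<^esub> K)"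
proof -
  interpret G: group "sym_group n" by (rule sym_group_is_group)
  have sc: "s \<in> carrier (sym_group n)" using s Sym_carrier by auto
  have isc: "inv\<^bsub>sym_group n\<^esub> s \<in> carrier (sym_group n)" using sc by (rule G.inv_closed)
  have KG: "K \<subseteq> carrier (sym_group n)" using subgroup.subset[OF K] .
  have mapsto: "C #>\<^bsub>sym_group n\<^esub> b \<in> rcosets\<^bsub>sym_group n\<^esub> K"
    if C: "C \<in> rcosets\<^bsub>sym_group n\<^esub> K" and b: "b \<in> carrier (sym_group n)" for C b
  proof -
    obtain a where a: "a \<in> carrier (sym_group n)" "C = K #>\<^bsub>sym_group n\<^esub> a"
      using C unfolding RCOSETS_def by auto
    have "C #>\<^bsub>sym_group n\<^esub> b = K #>\<^bsub>sym_group n\<^esub> (a \<otimes>\<^bsub>sym_group n\<^esub> b)"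
      using G.coset_mult_assoc[OF KG a(1) b] a(2) by simp
    then show ?thesis using a(1) b unfolding RCOSETS_def by auto
  qed
  have bk: "(C #>\<^bsub>sym_group n\<^esub> b) #>\<^bsub>sym_group n\<^esub> inv\<^bsub>sym_group n\<^esub> b = C"
    if C: "C \<in> rcosets\<^bsub>sym_group n\<^esub> K" and b: "b \<in> carrier (sym_group n)" for C b
  proof -
    obtain a where a: "a \<in> carrier (sym_group n)" "C = K #>\<^bsub>sym_group n\<^esub> a"
      using C unfolding RCOSETS_def by auto
    have "(C #>\<^bsub>sym_group n\<^esub> b) #>\<^bsub>sym_group n\<^esub> inv\<^bsub>sym_group n\<^esub> b
        = K #>\<^bsub>sym_group n\<^esub> (a \<otimes>\<^bsub>sym_group n\<^esub> b \<otimes>\<^bsub>sym_group n\<^esub> inv\<^bsub>sym_group n\<^esub> b)"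
      using G.coset_mult_assoc[OF KG a(1) b] G.coset_mult_assoc[OF KG G.m_closed[OF a(1) b] G.inv_closed[OF b]] a(2) by simp
    also have "\<dots> = C" using a G.m_assoc[OF a(1) b G.inv_closed[OF b]] G.r_inv[OF b] G.r_one[OF a(1)]
      by (simp del: sym_group_inv_equality)
    finally show ?thesis .
  qed
  have ii: "inv\<^bsub>sym_group n\<^esub> (inv\<^bsub>sym_group n\<^esub> s) = s" using sc by (rule G.inv_inv)
  show ?thesis
  proof (rule bij_betwI[where g="\<lambda>C. C #>\<^bsub>sym_group n\<^esub> inv\<^bsub>sym_group n\<^esub> s"])
    show "(\<lambda>C. C #>\<^bsub>sym_group n\<^esub> s) \<in> rcosets\<^bsub>sym_group n\<^esub> K \<rightarrow> rcosets\<^bsub>sym_group n\<^esub> K"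
      using mapsto sc by auto
    show "(\<lambda>C. C #>\<^bsub>sym_group n\<^esub> inv\<^bsub>sym_group n\<^esub> s) \<in> rcosets\<^bsub>sym_group n\<^esub> K \<rightarrow> rcosets\<^bsub>sym_group n\<^esub> K"
      using mapsto isc by auto
    show "\<And>x. x \<in> rcosets\<^bsub>sym_group n\<^esub> K \<Longrightarrow> (x #>\<^bsub>sym_group n\<^esub> s) #>\<^bsub>sym_group n\<^esub> inv\<^bsub>sym_group n\<^esub> s = x"
      using bk sc by blast
    show "\<And>y. y \<in> rcosets\<^bsub>sym_group n\<^esub> K \<Longrightarrow> (y #>\<^bsub>sym_group n\<^esub> inv\<^bsub>sym_group n\<^esub> s) #>\<^bsub>sym_group n\<^esub> s = y"
      using bk[OF _ isc] ii by metis
  qed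
qed

lemma ell_equivariant:
  fixes v :: "(nat \<Rightarrow> nat) \<Rightarrow> 'f::field"
  assumes K: "subgroup K (sym_group n)" and s: "s \<in> Sym n"
    and Tinv: "\<And>h x. h \<in> K \<Longrightarrow> x \<in> Sym n \<Longrightarrow> of_int (sign (h \<circ> x)) * v (h \<circ> x) = of_int (sign x) * v x"
  shows "(\<Sum>C\<in>rcosets\<^bsub>sym_group n\<^esub> K. of_int (sign (rep C)) * v (rep C \<circ> s))
       = of_int (sign s) * (\<Sum>C\<in>rcosets\<^bsub>sym_group n\<^esub> K. of_int (sign (rep C)) * v (rep C))"
proof -
  define T where "T x = (of_int (sign x) :: 'f) * v x" for x
  have sp: "s permutes {1..n}" using s by (simp add: Sym_def)
  have Tc: "T x = T (rep C)" if C: "C \<in> rcosets\<^bsub>sym_group n\<^esub> K" and x: "x \<in> C" for C x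
  proof -
    have rS: "rep C \<in> Sym n" using rcosets_rep(2)[OF K C] .
    have rp: "rep C permutes {1..n}" using rS by (simp add: Sym_def)
    have h: "x \<circ> inv' (rep C) \<in> K" using rcos_mem_iff[OF K rS, of x] rcosets_rep(3)[OF K C] x by simp
    have "x = (x \<circ> inv' (rep C)) \<circ> rep C" using permutes_inv_o(2)[OF rp] by (simp add: comp_assoc)
    then show ?thesis using Tinv[OF h rS] unfolding T_def by simp
  qed
  have trm: "of_int (sign (rep C)) * v (rep C \<circ> s) = of_int (sign s) * T (rep (C #>\<^bsub>sym_group n\<^esub> s))"
    if C: "C \<in> rcosets\<^bsub>sym_group n\<^esub> K" for C
  proof -
    have rp: "rep C permutes {1..n}" using rcosets_rep(2)[OF K C] by (simp add: Sym_def)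
    have C': "C #>\<^bsub>sym_group n\<^esub> s \<in> rcosets\<^bsub>sym_group n\<^esub> K"
      using bij_betwE[OF rcosets_shift_bij[OF K s]] C by blast
    have "rep C \<circ> s \<in> C #>\<^bsub>sym_group n\<^esub> s"
      using rcosets_rep(1)[OF K C] unfolding r_coset_def sym_group_mult by auto
    then have e: "T (rep C \<circ> s) = T (rep (C #>\<^bsub>sym_group n\<^esub> s))" using Tc[OF C'] by simp
    have "sign (rep C \<circ> s) = sign (rep C) * sign s"
      using sign_compose permutation_permutes rp sp by blast
    then have "(of_int (sign s) :: 'f) * T (rep C \<circ> s) = of_int (sign s) * of_int (sign s) * of_int (sign (rep C)) * v (rep C \<circ> s)"
      unfolding T_def by (simp add: mult_ac)
    also have "\<dots> = of_int (sign (rep C)) * v (rep C \<circ> s)"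
      by (metis mult_1 of_int_1 of_int_mult sign_idempotent)
    finally show ?thesis using e by simp
  qed
  have "(\<Sum>C\<in>rcosets\<^bsub>sym_group n\<^esub> K. of_int (sign (rep C)) * v (rep C \<circ> s))
      = (\<Sum>C\<in>rcosets\<^bsub>sym_group n\<^esub> K. of_int (sign s) * T (rep (C #>\<^bsub>sym_group n\<^esub> s)))"
    using trm by (rule sum.cong[OF refl])
  also have "\<dots> = of_int (sign s) * (\<Sum>C\<in>rcosets\<^bsub>sym_group n\<^esub> K. T (rep (C #>\<^bsub>sym_group n\<^esub> s)))"
    by (simp add: sum_distrib_left)
  also have "(\<Sum>C\<in>rcosets\<^bsub>sym_group n\<^esub> K. T (rep (C #>\<^bsub>sym_group n\<^esub> s))) = (\<Sum>C\<in>rcosets\<^bsub>sym_group n\<^esub> K. T (rep C))"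
    using sum.reindex_bij_betw[OF rcosets_shift_bij[OF K s], of "\<lambda>C. T (rep C)"] by simp
  finally show ?thesis by (simp add: T_def comp_def)
qed

lemma Sym_comp_iff:
  assumes s: "s \<in> Sym n" shows "g \<circ> s \<in> Sym n \<longleftrightarrow> g \<in> Sym n"
proof
  have sp: "s permutes {1..n}" using s by (simp add: Sym_def)
  assume "g \<circ> s \<in> Sym n"
  then have "(g \<circ> s) \<circ> inv' s \<in> Sym n" using permutes_compose[OF permutes_inv[OF sp]] by (simp add: Sym_def)
  then show "g \<in> Sym n" using permutes_inv_o(1)[OF sp] by (simp add: comp_assoc)
next
  assume "g \<in> Sym n" then show "g \<circ> s \<in> Sym n" using s by (simp add: Sym_def permutes_compose)
qed

lemma Sym_comp: "g \<in> Sym n \<Longrightarrow> s \<in> Sym n \<Longrightarrow> g \<circ> s \<in> Sym n"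
  by (simp add: Sym_def permutes_compose)

lemma Mact_Mspace:
  assumes v: "v \<in> Mspace n a b" and s: "s \<in> Sym n"
  shows "Mact s v \<in> Mspace n a b"
  using v Sym_comp_iff[OF s] Sym_comp[OF _ s]
  unfolding Mspace_def Mact_def by (auto simp: comp_assoc)

lemma Mspace_subspace: "is_subspace (Mspace n a b :: ((nat \<Rightarrow> nat) \<Rightarrow> 'f::field) set)"
  unfolding is_subspace_def Mspace_def by (auto simp: algebra_simps)

lemma Mact_linear: "is_linear_on V (Mact s)"
  unfolding is_linear_on_def Mact_def by auto

lemma sign_of_int_sq: "(of_int (sign s) :: 'f::field) * of_int (sign s) = 1"
  by (metis of_int_1 of_int_mult sign_idempotent)

lemma Sym_perm: "s \<in> Sym n \<Longrightarrow> permutation s"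
  unfolding Sym_def permutation_permutes by blast

lemma sign_comp_Sym: "s \<in> Sym n \<Longrightarrow> t \<in> Sym n \<Longrightarrow> sign (s \<circ> t) = sign s * sign t"
  by (simp add: Sym_perm sign_compose)

lemma is_rep_sgn: "is_rep n (sgn_space :: (unit \<Rightarrow> 'f::field) set) sgn_act"
  unfolding is_rep_def is_subspace_def is_linear_on_def sgn_space_def sgn_act_def
  by (auto simp: sign_comp_Sym algebra_simps)

lemma is_rep_M: "is_rep n (Mspace n a b :: ((nat \<Rightarrow> nat) \<Rightarrow> 'f::field) set) Mact"
  unfolding is_rep_def using Mspace_subspace Mact_Mspace Mact_linear
  by (auto simp: Mact_def comp_assoc)

lemma indecomposable_sgn: "indecomposable n (sgn_space :: (unit \<Rightarrow> 'f::field) set) sgn_act"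
proof -
  have ne: "sgn_space \<noteq> {\<lambda>_::unit. 0::'f}"
  proof
    assume "sgn_space = {\<lambda>_::unit. 0::'f}"
    then have "(\<lambda>_::unit. 1::'f) \<in> {\<lambda>_. 0}" by (simp add: sgn_space_def)
    then show False by (metis one_neq_zero singletonD)
  qed
  have full: "W = sgn_space" if W: "is_subspace W" "W \<noteq> {\<lambda>_::unit. 0::'f}" for W
  proof -
    obtain w where w: "w \<in> W" "w \<noteq> (\<lambda>_. 0)" using W is_subspace_def by blast
    have w0: "w () \<noteq> 0" using w(2) by (metis (full_types) old.unit.exhaust ext)
    have "u \<in> W" for u :: "unit \<Rightarrow> 'f"
    proof -
      have "(\<lambda>x. (u () / w ()) * w x) \<in> W" using W(1) w(1) unfolding is_subspace_def by blast
      moreover have "(\<lambda>x. (u () / w ()) * w x) = u" using w0 by (auto intro!: ext)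
      ultimately show ?thesis by simp
    qed
    then show ?thesis by (auto simp: sgn_space_def)
  qed
  show ?thesis unfolding indecomposable_def
  proof (intro conjI ne notI)
    assume "\<exists>W1 W2. is_subrep n W1 sgn_space sgn_act \<and> is_subrep n W2 sgn_space sgn_act \<and>
        is_direct_sum sgn_space W1 W2 \<and> W1 \<noteq> {\<lambda>_::unit. 0::'f} \<and> W2 \<noteq> {\<lambda>_. 0}"
    then obtain W1 W2 where h: "is_subrep n W1 sgn_space sgn_act" "is_subrep n W2 sgn_space sgn_act"
        "is_direct_sum sgn_space W1 W2" "W1 \<noteq> {\<lambda>_::unit. 0::'f}" "W2 \<noteq> {\<lambda>_. 0}" by blast
    have "W1 = sgn_space" "W2 = sgn_space" using full h unfolding is_subrep_def by auto
    then have "W1 \<inter> W2 = sgn_space" by simp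
    then show False using h(3) ne unfolding is_direct_sum_def by simp
  qed
qed

lemma sum_take_rep: "k \<le> c \<Longrightarrow> sum_list (take k (replicate c (1::nat) @ X)) = k"
  by (simp add: sum_list_replicate)

lemma block_rep_low:
  assumes "1 \<le> i" "i \<le> c"
  shows "block_of (replicate c 1 @ X) i = i - 1"
  by (rule block_of_eq) (use assms sum_take_rep[of "i - 1" c X] sum_take_rep[of i c X] in auto)

lemma block_rep_high:
  assumes "length X \<le> 1" "c + sum_list X = n" "c < i" "i \<le> n"
  shows "block_of (replicate c 1 @ X) i = c"
proof (rule block_of_eq)
  show "sum_list (take c (replicate c 1 @ X)) < i" using sum_take_rep[of c c X] assms by simp
  have "take 1 X = X" using assms(1) by (cases X) auto
  then have "sum_list (take (Suc c) (replicate c 1 @ X)) = c + sum_list X"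
    by (simp add: sum_list_replicate)
  then show "i \<le> sum_list (take (Suc c) (replicate c 1 @ X))" using assms by simp
qed

lemma young_sub_rep:
  assumes "length X \<le> 1" "c + sum_list X = n"
  shows "young_sub n (replicate c 1) X = Kfix n c"
proof (rule Set.set_eqI, rule iffI)
  fix h assume "h \<in> young_sub n (replicate c 1) X"
  then have hS: "h \<in> Sym n" and hb: "\<forall>i\<in>{1..n}. block_of (replicate c 1 @ X) (h i) = block_of (replicate c 1 @ X) i"
    by (auto simp: young_sub_def)
  have hp: "h permutes {1..n}" using hS by (simp add: Sym_def)
  have "h i = i" if i: "i \<in> {1..c}" for i
  proof -
    have iin: "i \<in> {1..n}" using i assms by auto
    have hin: "h i \<in> {1..n}" using permutes_in_image[OF hp] iin by simp
    have b: "block_of (replicate c 1 @ X) (h i) = i - 1" using hb iin block_rep_low[of i c X] i by simp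
    show ?thesis
    proof (cases "h i \<le> c")
      case True
      then have "h i - 1 = i - 1" using b block_rep_low[of "h i" c X] hin by simp
      then show ?thesis using hin i by (simp, linarith)
    next
      case False
      then have "block_of (replicate c 1 @ X) (h i) = c" using block_rep_high[OF assms, of "h i"] hin by simp
      then show ?thesis using b i by auto
    qed
  qed
  then show "h \<in> Kfix n c" using hp by (simp add: Kfix_def)
next
  fix h assume "h \<in> Kfix n c"
  then have hp: "h permutes {1..n}" and hf: "\<forall>i\<in>{1..c}. h i = i" by (auto simp: Kfix_def)
  have "block_of (replicate c 1 @ X) (h i) = block_of (replicate c 1 @ X) i" if i: "i \<in> {1..n}" for i
  proof (cases "i \<le> c")
    case True then show ?thesis using hf i by simp
  next
    case False
    have hin: "h i \<in> {1..n}" using permutes_in_image[OF hp] i by simp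
    have "\<not> h i \<le> c"
    proof
      assume "h i \<le> c"
      then have "h (h i) = h i" using hf hin by auto
      then have "h i = i" using permutes_inj[OF hp] by (meson injD)
      then show False using False \<open>h i \<le> c\<close> by simp
    qed
    then show ?thesis using block_rep_high[OF assms] hin i False by simp
  qed
  then show "h \<in> young_sub n (replicate c 1) X" using hp by (simp add: young_sub_def Sym_def)
qed

lemma young_char_rep:
  assumes "h \<in> Kfix n c"
  shows "young_char (replicate c 1) h = (of_int (sign h) :: 'f::field)"
proof -
  have hp: "h permutes {1..n}" and hf: "\<forall>i\<in>{1..c}. h i = i" using assms by (auto simp: Kfix_def)
  have "(\<lambda>i. if sum_list (replicate c (1::nat)) < i then h i else i) = h"
  proof
    fix i show "(if sum_list (replicate c (1::nat)) < i then h i else i) = h i"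
    proof (cases "i = 0")
      case True then show ?thesis using permutes_not_in[OF hp, of 0] by simp
    next
      case False then show ?thesis using hf by (auto simp: sum_list_replicate)
    qed
  qed
  then show ?thesis by (simp add: young_char_def)
qed

lemma summand_D:
  fixes X :: "nat list"
  assumes X: "length X \<le> 1" "c + sum_list X = n"
    and N: "(of_nat (card (rcosets\<^bsub>sym_group n\<^esub> (Kfix n c))) :: 'f::field) \<noteq> 0"
  shows "is_summand n (sgn_space :: (unit \<Rightarrow> 'f) set) sgn_act (Mspace n (replicate c 1) X) Mact"
proof -
  let ?K = "Kfix n c"
  let ?R = "rcosets\<^bsub>sym_group n\<^esub> ?K"
  let ?M = "Mspace n (replicate c 1) X :: ((nat \<Rightarrow> nat) \<Rightarrow> 'f) set"
  have K: "subgroup ?K (sym_group n)" by (rule Kfix_subgroup)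
  have KS: "?K \<subseteq> Sym n" by (auto simp: Kfix_def Sym_def)
  have Meq: "?M = {v. (\<forall>g. g \<notin> Sym n \<longrightarrow> v g = 0) \<and> (\<forall>h\<in>?K. \<forall>g\<in>Sym n. v (h \<circ> g) = of_int (sign h) * v g)}"
  proof -
    have yc: "\<forall>h\<in>?K. (young_char (replicate c 1) h :: 'f) = of_int (sign h)"
      using young_char_rep by blast
    show ?thesis unfolding Mspace_def young_sub_rep[OF X] using yc by auto
  qed
  define f0 where "f0 = (\<lambda>g. if g \<in> Sym n then of_int (sign g) else (0::'f))"
  define ell where "ell v = (\<Sum>C\<in>?R. of_int (sign (rep C)) * v (rep C))" for v :: "(nat \<Rightarrow> nat) \<Rightarrow> 'f"
  define Nf where "Nf = (of_nat (card ?R) :: 'f)"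
  have f0M: "f0 \<in> ?M" unfolding Meq f0_def
    using KS by (auto simp: sign_comp_Sym Sym_comp)
  have f0s: "Mact s f0 = (\<lambda>g. of_int (sign s) * f0 g)" if s: "s \<in> Sym n" for s
    unfolding Mact_def f0_def using Sym_comp_iff[OF s] s by (auto simp: sign_comp_Sym mult.commute)
  have ellf0: "ell f0 = Nf"
  proof -
    have "ell f0 = (\<Sum>C\<in>?R. 1)" unfolding ell_def f0_def
      using rcosets_rep(2)[OF K] sign_of_int_sq by (intro sum.cong) auto
    then show ?thesis by (simp add: Nf_def)
  qed
  have ell_add: "ell (\<lambda>x. v x + w x) = ell v + ell w" for v w
    unfolding ell_def by (simp add: distrib_left sum.distrib)
  have ell_smult: "ell (\<lambda>x. a * v x) = a * ell v" for a v
    unfolding ell_def by (simp add: sum_distrib_left mult_ac)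
  have ell_eq: "ell (Mact s v) = of_int (sign s) * ell v" if v: "v \<in> ?M" and s: "s \<in> Sym n" for s v
  proof -
    have "ell (Mact s v) = (\<Sum>C\<in>?R. of_int (sign (rep C)) * v (rep C \<circ> s))"
      unfolding ell_def Mact_def by simp
    also have "\<dots> = of_int (sign s) * ell v" unfolding ell_def
    proof (rule ell_equivariant[OF K s])
      fix h x assume h: "h \<in> ?K" and x: "x \<in> Sym n"
      have hS: "h \<in> Sym n" using h KS by auto
      have "v (h \<circ> x) = of_int (sign h) * v x" using v h x unfolding Meq by auto
      then show "of_int (sign (h \<circ> x)) * v (h \<circ> x) = of_int (sign x) * v x"
        using sign_comp_Sym[OF hS x] sign_of_int_sq[of h, where 'f='f] by (simp add: mult_ac)
    qed
    finally show ?thesis .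
  qed
  define W1 where "W1 = {w. \<exists>a. w = (\<lambda>g. a * f0 g)}"
  define W2 where "W2 = {v \<in> ?M. ell v = 0}"
  have Msub: "is_subspace ?M" by (rule Mspace_subspace)
  have W1M: "W1 \<subseteq> ?M" using Msub f0M unfolding W1_def is_subspace_def by auto
  have sr1: "is_subrep n W1 ?M Mact"
    unfolding is_subrep_def
  proof (intro conjI W1M ballI)
    show "is_subspace W1" unfolding is_subspace_def W1_def
      by (auto simp: algebra_simps) (metis mult_zero_left, metis distrib_right, metis mult.assoc)
  next
    fix s assume s: "s \<in> Sym n"
    show "Mact s ` W1 \<subseteq> W1"
    proof
      fix y assume "y \<in> Mact s ` W1"
      then obtain a where "y = Mact s (\<lambda>g. a * f0 g)" unfolding W1_def by auto
      then have "y = (\<lambda>g. (a * of_int (sign s)) * f0 g)" using f0s[OF s] unfolding Mact_def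
        by (simp add: fun_eq_iff mult_ac)
      then show "y \<in> W1" unfolding W1_def by blast
    qed
  qed
  have sr2: "is_subrep n W2 ?M Mact"
    unfolding is_subrep_def
  proof (intro conjI ballI)
    show "W2 \<subseteq> ?M" unfolding W2_def by auto
    show "is_subspace W2" using Msub unfolding is_subspace_def W2_def
      by (auto simp: ell_add ell_smult) (simp add: ell_def)
    fix s assume s: "s \<in> Sym n"
    show "Mact s ` W2 \<subseteq> W2" unfolding W2_def using ell_eq s Mact_Mspace[OF _ s] by auto
  qed
  have ds: "is_direct_sum ?M W1 W2"
    unfolding is_direct_sum_def
  proof (intro conjI ballI)
    show "W1 \<inter> W2 = {\<lambda>_. 0}"
    proof
      show "{\<lambda>_. 0} \<subseteq> W1 \<inter> W2" using sr1 sr2 unfolding is_subrep_def is_subspace_def by auto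
      show "W1 \<inter> W2 \<subseteq> {\<lambda>_. 0}"
      proof
        fix w assume "w \<in> W1 \<inter> W2"
        then obtain a where a: "w = (\<lambda>g. a * f0 g)" "ell w = 0" unfolding W1_def W2_def by auto
        then have "a * Nf = 0" using ell_smult ellf0 by simp
        then have "a = 0" using N Nf_def by simp
        then show "w \<in> {\<lambda>_. 0}" using a by simp
      qed
    qed
  next
    fix v assume v: "v \<in> ?M"
    define a where "a = ell v / Nf"
    have w1: "(\<lambda>g. a * f0 g) \<in> W1" unfolding W1_def by blast
    have "(\<lambda>g. (- a) * f0 g) \<in> ?M" using Msub f0M unfolding is_subspace_def by blast
    moreover have "\<forall>f\<in>?M. \<forall>g\<in>?M. (\<lambda>x. f x + g x) \<in> ?M" using Msub unfolding is_subspace_def by blast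
    ultimately have w2M: "(\<lambda>g. v g + (- a) * f0 g) \<in> ?M" using v by auto
    have "ell (\<lambda>g. v g + (- a) * f0 g) = ell v - a * Nf"
      using ell_add[of v "\<lambda>g. (- a) * f0 g"] ell_smult[of "-a" f0] ellf0 by simp
    also have "\<dots> = 0" using N unfolding a_def Nf_def by simp
    finally have w2: "(\<lambda>g. v g + (- a) * f0 g) \<in> W2" using w2M unfolding W2_def by blast
    have "v = (\<lambda>x. a * f0 x + (v x + (- a) * f0 x))" by (auto simp: algebra_simps)
    then show "\<exists>w1\<in>W1. \<exists>w2\<in>W2. v = (\<lambda>x. w1 x + w2 x)"
      using w1 w2 by (intro bexI[OF _ w1] bexI[OF _ w2]) simp
  qed
  define \<phi> where "\<phi> u = (\<lambda>g. u () * f0 g)" for u :: "unit \<Rightarrow> 'f"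
  have f0id: "f0 id = 1" unfolding f0_def by (simp add: Sym_def permutes_id)
  have iso: "Defs.is_iso n (sgn_space :: (unit \<Rightarrow> 'f) set) sgn_act W1 Mact"
    unfolding Defs.is_iso_def
  proof (intro exI conjI)
    show "is_hom n sgn_space sgn_act W1 Mact \<phi>"
      unfolding is_hom_def
    proof (intro conjI ballI)
      show "\<phi> ` sgn_space \<subseteq> W1" unfolding \<phi>_def W1_def by auto
      show "is_linear_on sgn_space \<phi>" unfolding is_linear_on_def \<phi>_def by (auto simp: algebra_simps)
      fix s v assume s: "s \<in> Sym n"
      show "\<phi> (sgn_act s v) = Mact s (\<phi> v)"
        using f0s[OF s] unfolding \<phi>_def sgn_act_def Mact_def by (simp add: fun_eq_iff mult_ac)
    qed
    show "bij_betw \<phi> sgn_space W1"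
      unfolding bij_betw_def
    proof
      show "inj_on \<phi> sgn_space"
      proof
        fix u v :: "unit \<Rightarrow> 'f" assume "\<phi> u = \<phi> v"
        then have "u () = v ()" using fun_cong[of "\<phi> u" "\<phi> v" id] f0id unfolding \<phi>_def by simp
        then show "u = v" by (metis (full_types) old.unit.exhaust ext)
      qed
      show "\<phi> ` sgn_space = W1"
      proof
        show "\<phi> ` sgn_space \<subseteq> W1" unfolding \<phi>_def W1_def by auto
        show "W1 \<subseteq> \<phi> ` sgn_space"
        proof
          fix w assume "w \<in> W1"
          then obtain a where "w = (\<lambda>g. a * f0 g)" unfolding W1_def by auto
          then have "w = \<phi> (\<lambda>_. a)" unfolding \<phi>_def by simp
          then show "w \<in> \<phi> ` sgn_space" by (simp add: sgn_space_def)
        qed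
      qed
    qed
  qed
  show ?thesis unfolding is_summand_def using sr1 sr2 ds iso by blast
qed

lemma sum_take_le: "sum_list (take k (g::nat list)) \<le> sum_list g"
  by (metis append_take_drop_id le_add1 sum_list_append)

lemma sum_take_app: "j \<le> length a \<Longrightarrow> sum_list (take j (a @ b)) = sum_list (take j (a::nat list))"
  by simp

lemma swap_in_young:
  assumes j: "j < length a" and aj: "a ! j \<ge> 2" and n: "sum_list a + sum_list b = n"
  defines "S \<equiv> sum_list (take j a)"
  shows "transpose (S+1) (S+2) \<in> young_sub n a b"
    and "(young_char a (transpose (S+1) (S+2)) :: 'f::field) = 1"
proof -
  have tS: "sum_list (take (Suc j) a) = S + a ! j" unfolding S_def using j by (simp add: take_Suc_conv_app_nth)
  have le: "S + 2 \<le> sum_list a" using tS aj sum_take_le[of "Suc j" a] by simp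
  have b1: "block_of (a @ b) (S+1) = j" and b2: "block_of (a @ b) (S+2) = j"
    using tS aj j by (auto intro!: block_of_eq simp: S_def)
  have perm: "transpose (S+1) (S+2) permutes {1..n}" by (rule permutes_swap_id) (use le n in auto)
  have "block_of (a @ b) (transpose (S+1) (S+2) i) = block_of (a @ b) i" for i
    by (cases "i = S+1"; cases "i = S+2") (auto simp: b1[simplified] b2[simplified])
  then show "transpose (S+1) (S+2) \<in> young_sub n a b" using perm by (simp add: young_sub_def Sym_def)
  have "(\<lambda>i. if sum_list a < i then transpose (S+1) (S+2) i else i) = id"
    using le by (auto intro!: ext)
  then show "(young_char a (transpose (S+1) (S+2)) :: 'f::field) = 1" unfolding young_char_def by (simp only: sign_id) simp
qed

lemma ones_sub_Kfix:
  assumes r: "Suc c \<le> r" and n: "r + sum_list b = n"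
  shows "young_sub n (replicate r 1) b \<subseteq> Kfix n (Suc c)"
proof
  fix h assume "h \<in> young_sub n (replicate r 1) b"
  then have hS: "h \<in> Sym n" and hb: "\<forall>i\<in>{1..n}. block_of (replicate r 1 @ b) (h i) = block_of (replicate r 1 @ b) i"
    by (auto simp: young_sub_def)
  have hp: "h permutes {1..n}" using hS by (simp add: Sym_def)
  have "h i = i" if i: "i \<in> {1..Suc c}" for i
  proof -
    have iin: "i \<in> {1..n}" using i r n by auto
    have hin: "h i \<in> {1..n}" using permutes_in_image[OF hp] iin by simp
    have bi: "block_of (replicate r 1 @ b) i = i - 1" using block_rep_low[of i r b] i r by simp
    have sumg: "sum_list (replicate r 1 @ b) = n" using n by (simp add: sum_list_replicate)
    have bd: "sum_list (take (block_of (replicate r 1 @ b) (h i)) (replicate r 1 @ b)) < h i \<and>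
        h i \<le> sum_list (take (Suc (block_of (replicate r 1 @ b) (h i))) (replicate r 1 @ b))"
      using block_of_bounds[of "h i" "replicate r 1 @ b"] hin sumg by simp
    have "block_of (replicate r 1 @ b) (h i) = i - 1" using hb iin bi by simp
    then have "i - 1 < h i \<and> h i \<le> i" using bd sum_take_rep[of "i - 1" r b] sum_take_rep[of i r b] i r by simp
    moreover have "1 \<le> i" using i by simp
    ultimately show ?thesis by linarith
  qed
  then show "h \<in> Kfix n (Suc c)" using hp by (simp add: Kfix_def)
qed

lemma subspace_sum:
  assumes V: "is_subspace V" and A: "finite A"
  shows "(\<forall>a\<in>A. u a \<in> V) \<Longrightarrow> (\<lambda>x. \<Sum>a\<in>A. u a x) \<in> V"
  using A
proof (induction A rule: finite_induct)
  case empty then show ?case using V by (simp add: is_subspace_def)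
next
  case (insert a F)
  then have i1: "(\<lambda>x. \<Sum>a\<in>F. u a x) \<in> V" and i2: "u a \<in> V" by auto
  have add: "\<forall>f\<in>V. \<forall>g\<in>V. (\<lambda>x. f x + g x) \<in> V" using V unfolding is_subspace_def by blast
  have "(\<lambda>x. u a x + (\<Sum>a\<in>F. u a x)) \<in> V" using add[rule_format, OF i2 i1] by simp
  then show ?case using insert by simp
qed

lemma char_ne: 
  assumes "prime p" "odd p" "CHAR('f::field) = p"
  shows "(1::'f) \<noteq> -1"
proof
  assume h: "(1::'f) = -1"
  have "(1::'f) + 1 = 0" by (subst (2) h) simp
  then have "(of_nat 2 :: 'f) = 0" by simp
  then have "p dvd 2" using assms(3) of_nat_eq_0_iff_char_dvd by metis
  then have "p \<le> 2" by (simp add: dvd_imp_le)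
  moreover have "p \<ge> 2" using assms(1) prime_ge_2_nat by blast
  ultimately show False using assms(2) by simp
qed

lemma sum_take_replicate: "sum_list (take k (replicate r (1::nat))) = min k r"
  by (simp add: sum_list_replicate)

lemma E_main:
  fixes a b :: "nat list"
  assumes p: "prime p" "odd p" "CHAR('f::field) = p" and nm: "n = m * p + c" "c < p"
    and pa: "is_partition a" and ab: "sum_list a + sum_list b = n"
    and summ: "is_summand n (sgn_space :: (unit \<Rightarrow> 'f) set) sgn_act (Mspace n a b) Mact"
  shows "sum_list (take k a) \<le> sum_list (take k (replicate c (1::nat)))"
proof -
  let ?M = "Mspace n a b :: ((nat \<Rightarrow> nat) \<Rightarrow> 'f) set"
  obtain W1 W2 \<phi> where sr1: "is_subrep n W1 ?M Mact" and sr2: "is_subrep n W2 ?M Mact"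
      and ds: "is_direct_sum ?M W1 W2" and hom: "is_hom n sgn_space sgn_act W1 Mact \<phi>"
      and bij: "bij_betw \<phi> (sgn_space :: (unit \<Rightarrow> 'f) set) W1"
    using summ unfolding is_summand_def Defs.is_iso_def by blast
  have phiW1: "\<phi> u \<in> W1" for u using hom unfolding is_hom_def sgn_space_def by auto
  have phi_smult: "\<phi> (\<lambda>x. r * u x) = (\<lambda>y. r * \<phi> u y)" for r u
    using hom unfolding is_hom_def is_linear_on_def sgn_space_def by blast
  have phi_act: "Mact s (\<phi> u) = (\<lambda>y. of_int (sign s) * \<phi> u y)" if s: "s \<in> Sym n" for s u
  proof -
    have "\<phi> (sgn_act s u) = Mact s (\<phi> u)" using hom s unfolding is_hom_def sgn_space_def by blast
    then show ?thesis using phi_smult[of "of_int (sign s)" u] unfolding sgn_act_def by simp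
  qed
  define f where "f = \<phi> (\<lambda>_. 1)"
  have fW1: "f \<in> W1" unfolding f_def by (rule phiW1)
  have fM: "f \<in> ?M" using fW1 sr1 unfolding is_subrep_def by blast
  have fnz: "f \<noteq> (\<lambda>_. 0)"
  proof
    assume f0: "f = (\<lambda>_. 0)"
    have "\<phi> (\<lambda>_. 0) = (\<lambda>_. 0)" using phi_smult[of 0 "\<lambda>_. 1"] by simp
    then have "\<phi> (\<lambda>_. 1) = \<phi> (\<lambda>_. 0)" using f0 f_def by simp
    then have "(\<lambda>_::unit. 1::'f) = (\<lambda>_. 0)"
      using bij unfolding bij_betw_def inj_on_def sgn_space_def by blast
    then show False by (metis one_neq_zero)
  qed
  have feq: "f (g \<circ> s) = of_int (sign s) * f g" if s: "s \<in> Sym n" for g s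
    using fun_cong[OF phi_act[OF s, of "\<lambda>_. 1"], of g] unfolding f_def Mact_def by simp
  have fout: "f g = 0" if "g \<notin> Sym n" for g using fM that unfolding Mspace_def by blast
  have idS: "id \<in> Sym n" by (simp add: Sym_def permutes_id)
  have fid: "f id \<noteq> 0"
  proof
    assume f0: "f id = 0"
    have "f g = 0" for g
    proof (cases "g \<in> Sym n")
      case True then show ?thesis using feq[OF True, of id] f0 by simp
    next
      case False then show ?thesis by (rule fout)
    qed
    then show False using fnz by auto
  qed
  have chi: "(young_char a h :: 'f) = of_int (sign h)" if h: "h \<in> young_sub n a b" for h
  proof -
    have hS: "h \<in> Sym n" using h by (simp add: young_sub_def)
    have "f (h \<circ> id) = young_char a h * f id" using fM h idS unfolding Mspace_def by blast
    moreover have "f (id \<circ> h) = of_int (sign h) * f id" using feq[OF hS] .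
    ultimately show ?thesis using fid by simp
  qed
  show ?thesis
  proof (rule ccontr)
    assume neg: "\<not> ?thesis"
    consider (two) "\<exists>j<length a. a ! j \<ge> 2" | (ones) "\<forall>j<length a. a ! j < 2" by force
    then show False
    proof cases
      case two
      then obtain j where j: "j < length a" "a ! j \<ge> 2" by blast
      define S where "S = sum_list (take j a)"
      have "(young_char a (transpose (S+1) (S+2)) :: 'f) = 1"
        using swap_in_young(2)[OF j ab] unfolding S_def by blast
      moreover have "(young_char a (transpose (S+1) (S+2)) :: 'f) = of_int (sign (transpose (S+1) (S+2)))"
        using chi swap_in_young(1)[OF j ab] unfolding S_def by blast
      ultimately have "(1::'f) = -1" by (simp add: sign_swap_id)
      then show False using char_ne[OF p] by simp
    next
      case ones
      define r where "r = length a"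
      have arep: "a = replicate r 1"
      proof (rule nth_equalityI)
        show "length a = length (replicate r 1)" by (simp add: r_def)
        fix i assume i: "i < length a"
        have "a ! i \<noteq> 0" using pa i unfolding is_partition_def by (metis nth_mem)
        moreover have "a ! i < 2" using ones i by blast
        ultimately show "a ! i = replicate r 1 ! i" using i by (simp add: r_def)
      qed
      have e1: "sum_list (take k a) = min k r" using arep sum_take_replicate by metis
      have e2: "sum_list (take k (replicate c (1::nat))) = min k c" by (rule sum_take_replicate)
      have "min k r > min k c" using neg e1 e2 by linarith
      then have cr: "Suc c \<le> r" by linarith
      have rb: "r + sum_list b = n" using ab arep by (simp add: sum_list_replicate)
      let ?K = "Kfix n (Suc c)"
      let ?R = "rcosets\<^bsub>sym_group n\<^esub> ?K"
      have K: "subgroup ?K (sym_group n)" by (rule Kfix_subgroup)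
      have KS: "?K \<subseteq> Sym n" by (auto simp: Kfix_def Sym_def)
      have Hsub: "young_sub n a b \<subseteq> ?K" using ones_sub_Kfix[OF cr rb] arep by simp
      have m1: "m \<ge> 1" using nm cr rb by (cases m) auto
      have pp: "p > 0" using p(1) prime_gt_0_nat by blast
      have Nz: "(of_nat (card ?R) :: 'f) = 0"
        using ncos_dvd[OF pp m1 nm(1)] p(3) of_nat_eq_0_iff_char_dvd by metis
      define w where "w = (\<lambda>g. if g \<in> ?K then f g else 0)"
      have Kcomp: "h \<circ> g \<in> ?K \<longleftrightarrow> g \<in> ?K" if h: "h \<in> ?K" and g: "g \<in> Sym n" for h g
      proof -
        have hp: "h permutes {1..n}" and hf: "\<forall>i\<in>{1..Suc c}. h i = i" using h by (auto simp: Kfix_def)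
        have gp: "g permutes {1..n}" using g by (simp add: Sym_def)
        have "h (g i) = i \<longleftrightarrow> g i = i" if i: "i \<in> {1..Suc c}" for i
          using hf i permutes_inj[OF hp] by (metis injD)
        then show ?thesis using hp gp permutes_compose by (auto simp: Kfix_def)
      qed
      have wM: "w \<in> ?M"
        unfolding Mspace_def
      proof (intro CollectI conjI allI impI ballI)
        fix g assume "g \<notin> Sym n" then show "w g = 0" using KS unfolding w_def by auto
      next
        fix h g assume h: "h \<in> young_sub n a b" and g: "g \<in> Sym n"
        have "f (h \<circ> g) = young_char a h * f g" using fM h g unfolding Mspace_def by blast
        then show "w (h \<circ> g) = young_char a h * w g" using Kcomp[OF subsetD[OF Hsub h] g] unfolding w_def by simp
      qed
      obtain w1 w2 where w1: "w1 \<in> W1" and w2: "w2 \<in> W2" and wsplit: "w = (\<lambda>x. w1 x + w2 x)"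
        using ds wM unfolding is_direct_sum_def by blast
      obtain u1 where u1: "w1 = \<phi> u1" using w1 bij unfolding bij_betw_def sgn_space_def by auto
      have w1act: "w1 (g \<circ> s) = of_int (sign s) * w1 g" if s: "s \<in> Sym n" for g s
        using fun_cong[OF phi_act[OF s, of u1], of g] u1 unfolding Mact_def by simp
      have invS: "inv' (rep C) \<in> Sym n" and sgninv: "sign (inv' (rep C)) = sign (rep C)" if C: "C \<in> ?R" for C
      proof -
        have rp: "rep C permutes {1..n}" using rcosets_rep(2)[OF K C] by (simp add: Sym_def)
        show "inv' (rep C) \<in> Sym n" using permutes_inv[OF rp] by (simp add: Sym_def)
        show "sign (inv' (rep C)) = sign (rep C)" using sign_inverse permutation_permutes rp by blast
      qed
      define S2 where "S2 = (\<lambda>g. \<Sum>C\<in>?R. of_int (sign (rep C)) * Mact (inv' (rep C)) w2 g)"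
      have S2W2: "S2 \<in> W2"
      proof -
        have sub: "is_subspace W2" using sr2 unfolding is_subrep_def by blast
        have "(\<lambda>g. of_int (sign (rep C)) * Mact (inv' (rep C)) w2 g) \<in> W2" if C: "C \<in> ?R" for C
        proof -
          have "Mact (inv' (rep C)) w2 \<in> W2" using sr2 invS[OF C] w2 unfolding is_subrep_def by blast
          moreover have "\<forall>r. \<forall>f\<in>W2. (\<lambda>x. r * f x) \<in> W2" using sub unfolding is_subspace_def by blast
          ultimately show ?thesis by blast
        qed
        then show ?thesis unfolding S2_def by (rule subspace_sum[OF sub finite_rcosets[OF K], rule_format]) 
      qed
      have "f g = S2 g" for g
      proof -
        have "f g = (\<Sum>C\<in>?R. of_int (sign (rep C)) * (if g \<circ> inv' (rep C) \<in> ?K then f (g \<circ> inv' (rep C)) else 0))"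
          by (rule coset_sum_E[OF K fout feq])
        also have "\<dots> = (\<Sum>C\<in>?R. of_int (sign (rep C)) * w1 (g \<circ> inv' (rep C)) + of_int (sign (rep C)) * w2 (g \<circ> inv' (rep C)))"
        proof (rule sum.cong[OF refl])
          fix C
          have "(if x \<in> ?K then f x else 0) = w1 x + w2 x" for x
            using fun_cong[OF wsplit, of x] unfolding w_def by simp
          then show "of_int (sign (rep C)) * (if g \<circ> inv' (rep C) \<in> ?K then f (g \<circ> inv' (rep C)) else 0)
              = of_int (sign (rep C)) * w1 (g \<circ> inv' (rep C)) + of_int (sign (rep C)) * w2 (g \<circ> inv' (rep C))"
            by (simp add: distrib_left)
        qed
        also have "\<dots> = (\<Sum>C\<in>?R. w1 g) + S2 g"
          unfolding sum.distrib S2_def Mact_def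
        proof -
          have "(\<Sum>C\<in>?R. of_int (sign (rep C)) * w1 (g \<circ> inv' (rep C))) = (\<Sum>C\<in>?R. w1 g)"
          proof (rule sum.cong[OF refl])
            fix C assume C: "C \<in> ?R"
            show "of_int (sign (rep C)) * w1 (g \<circ> inv' (rep C)) = w1 g"
              using w1act[OF invS[OF C]] sgninv[OF C] sign_of_int_sq[of "rep C", where 'f='f]
              by (simp add: mult.assoc[symmetric])
          qed
          then show "(\<Sum>C\<in>?R. of_int (sign (rep C)) * w1 (g \<circ> inv' (rep C))) + (\<Sum>C\<in>?R. of_int (sign (rep C)) * w2 (g \<circ> inv' (rep C)))
              = (\<Sum>C\<in>?R. w1 g) + (\<Sum>C\<in>?R. of_int (sign (rep C)) * w2 (g \<circ> inv' (rep C)))" by simp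
        qed
        also have "(\<Sum>C\<in>?R. w1 g) = of_nat (card ?R) * w1 g" by simp
        finally show ?thesis using Nz by simp
      qed
      then have "f = S2" by auto
      then have "f \<in> W1 \<inter> W2" using fW1 S2W2 by simp
      then have "f = (\<lambda>_. 0)" using ds unfolding is_direct_sum_def by blast
      then show False using fnz by simp
    qed
  qed
qed

theorem lemma5p4:
  fixes p n m c :: nat
  assumes "prime p" and "odd p" and "CHAR('f::field) = p"
    and "n \<ge> 1" and "n = m * p + c" and "c < p"
  shows "is_signed_young n p (replicate c 1) (if m = 0 then [] else [m])
           (sgn_space :: (unit \<Rightarrow> 'f) set) sgn_act"
proof -
  define mu where "mu = (if m = 0 then [] else [m])"
  define X where "X = map ((*) p) mu"
  have lenX: "length X \<le> 1" unfolding X_def mu_def by simp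
  have sumX: "c + sum_list X = n" unfolding X_def mu_def using assms(5) by (simp add: mult.commute)
  have takeX: "sum_list (take k X) = sum_list X" if "k \<ge> 1" for k
    using that lenX by (cases X) auto
  have pmu: "is_partition mu" unfolding mu_def is_partition_def by simp
  have prep: "is_partition (replicate c (1::nat))" unfolding is_partition_def by simp
  have sums: "sum_list (replicate c (1::nat)) + p * sum_list mu = n"
    unfolding mu_def using assms(5) by (simp add: sum_list_replicate mult.commute)
  have N: "(of_nat (card (rcosets\<^bsub>sym_group n\<^esub> (Kfix n c))) :: 'f) \<noteq> 0"
    using ncos_ndvd[OF assms(1) assms(6) assms(5)] assms(3) of_nat_eq_0_iff_char_dvd by metis
  have summ: "is_summand n (sgn_space :: (unit \<Rightarrow> 'f) set) sgn_act (Mspace n (replicate c 1) X) Mact"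
    by (rule summand_D[OF lenX sumX N])
  have dom: "dominates2 (replicate c 1) X a b"
    if ab: "is_partition a \<and> is_partition b \<and> sum_list a + sum_list b = n
          \<and> is_summand n (sgn_space :: (unit \<Rightarrow> 'f) set) sgn_act (Mspace n a b) Mact" for a b
    unfolding dominates2_def
  proof (intro allI impI conjI)
    fix k :: nat assume k: "k \<ge> 1"
    show "sum_list (take k a) \<le> sum_list (take k (replicate c 1))"
      using E_main[OF assms(1,2,3,5,6)] ab by blast
    have "sum_list a + sum_list (take k b) \<le> n" using ab sum_take_le[of k b] by simp
    also have "n = sum_list (replicate c (1::nat)) + sum_list (take k X)"
      using takeX[OF k] sumX by (simp add: sum_list_replicate)
    finally show "sum_list a + sum_list (take k b) \<le> sum_list (replicate c 1) + sum_list (take k X)" .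
  qed
  show ?thesis
    unfolding is_signed_young_def mu_def[symmetric] X_def[symmetric]
    using prep pmu sums is_rep_sgn indecomposable_sgn summ dom by blast
qed

end
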